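(* For $x\in(0,\pi/2)$ let $A(x)=(\cos x)(\sin x-x\cos x)^{2}(x-\cos x\sin x)$, $B(x)=(x-\cos x\sin x)^{2}(\sin x-x\cos x)$, and $C(x)=x(\sin^{2}x)(-2x^{2}\cos x+x\sin x+\cos x\sin^{2}x)$. Then for every fixed $k\geq 1$ the function $x\mapsto C(x)/(kA(x)+B(x))$ is increasing on $(0,\pi/2)$, and for all $x\in(0,\pi/2)$ $$\frac{12}{5(k+2)}<\frac{C(x)}{kA(x)+B(x)}<1.$$ *)

theory Defs
  imports "HOL-Analysis.Analysis"
begin

definition fA :: "real \<Rightarrow> real" where
  "fA x = cos x * (sin x - x * cos x)^2 * (x - cos x * sin x)"

definition fB :: "real \<Rightarrow> real" where
  "fB x = (x - cos x * sin x)^2 * (sin x - x * cos x)"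

definition fC :: "real \<Rightarrow> real" where
  "fC x = x * (sin x)^2 * (-2 * x^2 * cos x + x * sin x + cos x * (sin x)^2)"

end

theory Submission
  imports Defs "HOL-Real_Asymp.Real_Asymp"
begin

definition SI :: "real \<Rightarrow> real" where
  "SI y = 3628800*y - 604800*y^3 + 30240*y^5 - 720*y^7 + 10*y^9 + y^10"
definition CI :: "real \<Rightarrow> real" where
  "CI y = 3628800 - 1814400*y^2 + 151200*y^4 - 5040*y^6 + 90*y^8 - y^10"

lemma sin_SI: assumes "0 \<le> y" shows "3628800 * sin y \<le> SI y"
proof -
  have h: "\<bar>sin y - (\<Sum>m<10. sin_coeff m * y ^ m)\<bar> \<le> inverse (fact 10) * \<bar>y\<bar> ^ 10"
    by (rule Maclaurin_sin_bound)
  have e: "(\<Sum>m<10. sin_coeff m * y ^ m) = y - y^3/6 + y^5/120 - y^7/5040 + y^9/362880"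
    by (simp add: lessThan_nat_numeral sin_coeff_def fact_numeral)
  have f: "inverse (fact 10) * \<bar>y\<bar> ^ 10 = y^10 / 3628800"
    using assms by (simp add: fact_numeral eval_nat_numeral field_simps)
  have "sin y - (y - y^3/6 + y^5/120 - y^7/5040 + y^9/362880) \<le> y^10 / 3628800"
    using h unfolding e f by (meson abs_le_iff)
  then show ?thesis unfolding SI_def by linarith
qed

lemma cos_CI: "CI y \<le> 3628800 * cos y"
proof -
  obtain t where ct: "cos y = (\<Sum>m<10. cos_coeff m * y ^ m) + (cos(t + 1/2 * real 10 * pi) / fact 10) * y ^ 10"
    using Maclaurin_cos_expansion by blast
  have e: "(\<Sum>m<10. cos_coeff m * y ^ m) = 1 - y^2/2 + y^4/24 - y^6/720 + y^8/40320"
    by (simp add: lessThan_nat_numeral cos_coeff_def fact_numeral)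
  have y10: "0 \<le> y ^ 10" by (rule zero_le_even_power) simp
  have m: "-1 * y^10 \<le> cos(t + 1/2 * real 10 * pi) * y^10"
    by (rule mult_right_mono[OF cos_ge_minus_one y10])
  have f10: "(fact 10::real) = 3628800" by (simp add: fact_numeral)
  have "cos y = 1 - y^2/2 + y^4/24 - y^6/720 + y^8/40320 + cos(t + 1/2 * real 10 * pi) * y^10 / 3628800"
    using ct unfolding e f10 by simp
  then show ?thesis unfolding CI_def using m by linarith
qed

lemma polyK: "2048 * (7257600*x - SI(2*x)) = x^3 * (4725 * x^0 * (8 - 5*x)^7 + 165375 * x^1 * (8 - 5*x)^6 + 2420145 * x^2 * (8 - 5*x)^5 + 19159875 * x^3 * (8 - 5*x)^4 + 88608015 * x^4 * (8 - 5*x)^3 + 240007725 * x^5 * (8 - 5*x)^2 + 354134155 * x^6 * (8 - 5*x)^1 + 217569873 * x^7 * (8 - 5*x)^0)"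
  unfolding SI_def by algebra

lemma polyN: "268435456 * ((7257600*x - SI(2*x))^3 - 8 * (SI x - x * CI x)^2 * (SI (2*x) - 2*x*CI(2*x))) = x^13 * (602791875 * x^0 * (8 - 5*x)^20 + 60279187500 * x^1 * (8 - 5*x)^19 + 2845258022250 * x^2 * (8 - 5*x)^18 + 84267513421875 * x^3 * (8 - 5*x)^17 + 1755856103951250 * x^4 * (8 - 5*x)^16 + 27354434049621000 * x^5 * (8 - 5*x)^15 + 330524052301170000 * x^6 * (8 - 5*x)^14 + 3171126278439800100 * x^7 * (8 - 5*x)^13 + 24529694809207894650 * x^8 * (8 - 5*x)^12 + 154454540823824958000 * x^9 * (8 - 5*x)^11 + 795803826007562314500 * x^10 * (8 - 5*x)^10 + 3360182929317887069250 * x^11 * (8 - 5*x)^9 + 11603697102715720745160 * x^12 * (8 - 5*x)^8 + 32584367289892301671320 * x^13 * (8 - 5*x)^7 + 73652758524731588401440 * x^14 * (8 - 5*x)^6 + 131892250845166499704900 * x^15 * (8 - 5*x)^5 + 182630002295032209572075 * x^16 * (8 - 5*x)^4 + 188334360781962904363652 * x^17 * (8 - 5*x)^3 + 135956105832106783877538 * x^18 * (8 - 5*x)^2 + 61192135473511967113635 * x^19 * (8 - 5*x)^1 + 12896653213166905653246 * x^20 * (8 - 5*x)^0)"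
  unfolding SI_def CI_def by algebra

lemma posK: fixes x :: real assumes "0 < x" "x < 8/5" shows "0 < (4725 * x^0 * (8 - 5*x)^7 + 165375 * x^1 * (8 - 5*x)^6 + 2420145 * x^2 * (8 - 5*x)^5 + 19159875 * x^3 * (8 - 5*x)^4 + 88608015 * x^4 * (8 - 5*x)^3 + 240007725 * x^5 * (8 - 5*x)^2 + 354134155 * x^6 * (8 - 5*x)^1 + 217569873 * x^7 * (8 - 5*x)^0)"
  using assms
  by (intro add_pos_nonneg mult_pos_pos mult_nonneg_nonneg zero_le_power zero_less_power) auto

lemma posN: fixes x :: real assumes "0 < x" "x < 8/5" shows "0 < (602791875 * x^0 * (8 - 5*x)^20 + 60279187500 * x^1 * (8 - 5*x)^19 + 2845258022250 * x^2 * (8 - 5*x)^18 + 84267513421875 * x^3 * (8 - 5*x)^17 + 1755856103951250 * x^4 * (8 - 5*x)^16 + 27354434049621000 * x^5 * (8 - 5*x)^15 + 330524052301170000 * x^6 * (8 - 5*x)^14 + 3171126278439800100 * x^7 * (8 - 5*x)^13 + 24529694809207894650 * x^8 * (8 - 5*x)^12 + 154454540823824958000 * x^9 * (8 - 5*x)^11 + 795803826007562314500 * x^10 * (8 - 5*x)^10 + 3360182929317887069250 * x^11 * (8 - 5*x)^9 + 11603697102715720745160 * x^12 * (8 - 5*x)^8 + 32584367289892301671320 * x^13 * (8 - 5*x)^7 + 73652758524731588401440 * x^14 * (8 - 5*x)^6 + 131892250845166499704900 * x^15 * (8 - 5*x)^5 + 182630002295032209572075 * x^16 * (8 - 5*x)^4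 + 188334360781962904363652 * x^17 * (8 - 5*x)^3 + 135956105832106783877538 * x^18 * (8 - 5*x)^2 + 61192135473511967113635 * x^19 * (8 - 5*x)^1 + 12896653213166905653246 * x^20 * (8 - 5*x)^0)"
  using assms
  by (intro add_pos_nonneg mult_pos_pos mult_nonneg_nonneg zero_le_power zero_less_power) auto

lemma pi_half_lt: "pi / 2 < 8/5"
  using pi_approx(2) by simp

lemma KI_pos: fixes x :: real assumes "0 < x" "x < 8/5" shows "0 < 7257600*x - SI(2*x)"
proof -
  have "0 < x^3 * (4725 * x^0 * (8 - 5*x)^7 + 165375 * x^1 * (8 - 5*x)^6 + 2420145 * x^2 * (8 - 5*x)^5 + 19159875 * x^3 * (8 - 5*x)^4 + 88608015 * x^4 * (8 - 5*x)^3 + 240007725 * x^5 * (8 - 5*x)^2 + 354134155 * x^6 * (8 - 5*x)^1 + 217569873 * x^7 * (8 - 5*x)^0)" using posK[OF assms] assms by simp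
  then have "0 < 2048 * (7257600*x - SI(2*x))" unfolding polyK .
  then show ?thesis by simp
qed

lemma NI_pos: fixes x :: real assumes "0 < x" "x < 8/5"
  shows "0 < (7257600*x - SI(2*x))^3 - 8 * (SI x - x * CI x)^2 * (SI (2*x) - 2*x*CI(2*x))"
proof -
  have "0 < x^13 * (602791875 * x^0 * (8 - 5*x)^20 + 60279187500 * x^1 * (8 - 5*x)^19 + 2845258022250 * x^2 * (8 - 5*x)^18 + 84267513421875 * x^3 * (8 - 5*x)^17 + 1755856103951250 * x^4 * (8 - 5*x)^16 + 27354434049621000 * x^5 * (8 - 5*x)^15 + 330524052301170000 * x^6 * (8 - 5*x)^14 + 3171126278439800100 * x^7 * (8 - 5*x)^13 + 24529694809207894650 * x^8 * (8 - 5*x)^12 + 154454540823824958000 * x^9 * (8 - 5*x)^11 + 795803826007562314500 * x^10 * (8 - 5*x)^10 + 3360182929317887069250 * x^11 * (8 - 5*x)^9 + 11603697102715720745160 * x^12 * (8 - 5*x)^8 + 32584367289892301671320 * x^13 * (8 - 5*x)^7 + 73652758524731588401440 * x^14 * (8 - 5*x)^6 + 131892250845166499704900 * x^15 * (8 - 5*x)^5 + 182630002295032209572075 * x^16 * (8 - 5*x)^4 + 188334360781962904363652 * x^17 * (8 - 5*x)^3 + 135956105832106783877538 * x^18 * (8 - 5*x)^2 + 61192135473511967113635 * x^19 * (8 - 5*x)^1 + 12896653213166905653246 * x^20 * (8 - 5*x)^0)" using posN[OF assms] assms by simp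
  then have "0 < 268435456 * ((7257600*x - SI(2*x))^3 - 8 * (SI x - x * CI x)^2 * (SI (2*x) - 2*x*CI(2*x)))"
    unfolding polyN .
  then show ?thesis by simp
qed


lemma J_pos: fixes t :: real assumes "0 < t" "t < pi" shows "0 < sin t - t * cos t"
proof -
  have "(\<lambda>z. sin z - z * cos z) 0 < (\<lambda>z. sin z - z * cos z) t"
  proof (rule DERIV_pos_imp_increasing_open[OF assms(1)])
    fix z :: real assume z: "0 < z" "z < t"
    then have "0 < z * sin z" using sin_gt_zero[of z] assms by auto
    moreover have "DERIV (\<lambda>z. sin z - z * cos z) z :> z * sin z"
      by (auto intro!: derivative_eq_intros simp: algebra_simps)
    ultimately show "\<exists>y. DERIV (\<lambda>z. sin z - z * cos z) z :> y \<and> 0 < y" by blast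
  next
    show "continuous_on {0..t} (\<lambda>z. sin z - z * cos z)" by (intro continuous_intros)
  qed
  then show ?thesis by simp
qed

lemma N_pos: fixes x :: real assumes "0 < x" "x < pi/2"
  shows "0 < (x - cos x * sin x)^3 - 2*(sin x - x*cos x)^2 * (cos x * sin x - x*((cos x)^2 - (sin x)^2))"
proof -
  have x85: "x < 8/5" using assms pi_half_lt by linarith
  define K where "K = 2*x - sin(2*x)"
  define J1 where "J1 = sin x - x * cos x"
  define J2 where "J2 = sin(2*x) - 2*x*cos(2*x)"
  have eq: "(x - cos x * sin x)^3 - 2*(sin x - x*cos x)^2 * (cos x * sin x - x*((cos x)^2 - (sin x)^2)) = (K^3 - 8*J1^2*J2)/8"
    unfolding K_def J1_def J2_def sin_double cos_double by algebra
  have J1p: "0 < J1" using J_pos[of x] assms pi_gt_zero unfolding J1_def by linarith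
  have J2p: "0 < J2" using J_pos[of "2*x"] assms unfolding J2_def by linarith
  have s1: "3628800 * sin x \<le> SI x" by (rule sin_SI) (use assms in simp)
  have s2: "3628800 * sin (2*x) \<le> SI (2*x)" by (rule sin_SI) (use assms in simp)
  have KI: "7257600*x - SI(2*x) \<le> 3628800*K" using s2 unfolding K_def by (simp add: algebra_simps)
  have KIp: "0 < 7257600*x - SI(2*x)" by (rule KI_pos[OF assms(1) x85])
  have J1I: "3628800*J1 \<le> SI x - x * CI x"
  proof -
    have "x * CI x \<le> x * (3628800 * cos x)" by (rule mult_left_mono[OF cos_CI]) (use assms in simp)
    moreover have "x * (3628800 * cos x) = 3628800 * (x * cos x)" by simp
    moreover have "3628800 * (sin x - x * cos x) = 3628800 * sin x - 3628800 * (x * cos x)" by (simp add: algebra_simps)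
    ultimately show ?thesis using s1 unfolding J1_def by linarith
  qed
  have J2I: "3628800*J2 \<le> SI (2*x) - 2*x*CI(2*x)"
  proof -
    have "(2*x) * CI (2*x) \<le> (2*x) * (3628800 * cos (2*x))" by (rule mult_left_mono[OF cos_CI]) (use assms in simp)
    moreover have "(2*x) * (3628800 * cos (2*x)) = 3628800 * (2*x * cos (2*x))" by simp
    moreover have "3628800 * (sin (2*x) - 2*x * cos (2*x)) = 3628800 * sin (2*x) - 3628800 * (2*x * cos (2*x))" by (simp add: algebra_simps)
    ultimately show ?thesis using s2 unfolding J2_def by linarith
  qed
  have A: "(7257600*x - SI(2*x))^3 \<le> (3628800*K)^3" by (rule power_mono[OF KI]) (use KIp in linarith)
  have B: "(3628800*J1)^2 \<le> (SI x - x * CI x)^2" by (rule power_mono[OF J1I]) (use J1p in linarith)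
  have C: "(3628800*J1)^2 * (3628800*J2) \<le> (SI x - x * CI x)^2 * (SI (2*x) - 2*x*CI(2*x))"
    by (rule mult_mono[OF B J2I]) (use J2p in auto)
  have "0 < (7257600*x - SI(2*x))^3 - 8 * (SI x - x * CI x)^2 * (SI (2*x) - 2*x*CI(2*x))"
    by (rule NI_pos[OF assms(1) x85])
  then have "0 < (3628800*K)^3 - 8*((3628800*J1)^2 * (3628800*J2))" using A C by linarith
  moreover have "(3628800*K)^3 - 8*((3628800*J1)^2 * (3628800*J2)) = 3628800^3 * (K^3 - 8*J1^2*J2)"
    by algebra
  ultimately have "0 < (3628800::real)^3 * (K^3 - 8*J1^2*J2)" by linarith
  then have "0 < K^3 - 8*J1^2*J2" by (simp only: zero_less_mult_iff) simp
  then have "0 < (K^3 - 8*J1^2*J2)/8" by simp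
  then show ?thesis unfolding eq .
qed


definition phiF :: "real \<Rightarrow> real" where
  "phiF x = (x + cos x * sin x)/(x - cos x * sin x) - cos x * x/(sin x - x * cos x)"

definition ppF :: "real \<Rightarrow> real" where
  "ppF x = cos x * (sin x - x * cos x)/(x * (sin x)^2)"

lemma frac_alg: fixes U V W :: real assumes "U \<noteq> 0" "V \<noteq> 0"
  shows "(-2*W)/(V*V) - (-V)/(U*U) = (V^3 - 2*U^2*W)/(U^2*V^2)"
  using assms by (simp add: field_simps power2_eq_square power3_eq_cube)

lemma phi_alg: fixes sv cv x :: real assumes h: "sv^2 + cv^2 = 1" and u: "sv - x * cv \<noteq> 0" and v: "x - cv * sv \<noteq> 0"
shows "((1 + (cv * cv - sv * sv)) * (x - cv * sv) - (x + cv * sv) * (1 - (cv * cv - sv * sv))) / ((x - cv * sv) * (x - cv * sv)) - ((cv - sv * x) * (sv - x * cv) - cv * x * (sv * x)) / ((sv - x * cv) * (sv - x * cv)) = ((x - cv * sv)^3 - 2 * (sv - x * cv)^2 * (cv * sv - x * (cv^2 - sv^2))) / ((sv - x * cv)^2 * (x - cv * sv)^2)"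
proof -
  have e1: "(1 + (cv * cv - sv * sv)) * (x - cv * sv) - (x + cv * sv) * (1 - (cv * cv - sv * sv)) = -2 * (cv * sv - x * (cv^2 - sv^2))"
    by (simp add: algebra_simps power2_eq_square)
  have e2': "(cv - sv * x) * (sv - x * cv) - cv * x * (sv * x) = cv * sv - x * (sv^2+cv^2)" by (simp add: algebra_simps power2_eq_square)
  have e2: "(cv - sv * x) * (sv - x * cv) - cv * x * (sv * x) = -(x - cv * sv)" unfolding e2' h by simp
  show ?thesis unfolding e1 e2 by (rule frac_alg[OF u v])
qed

lemma phi_deriv: assumes u: "sin x - x * cos x \<noteq> 0" and v: "x - cos x * sin x \<noteq> 0"
  shows "(phiF has_real_derivative ((x - cos x * sin x)^3 - 2*(sin x - x*cos x)^2 * (cos x * sin x - x*((cos x)^2 - (sin x)^2)))/((sin x - x * cos x)^2 * (x - cos x * sin x)^2)) (at x)"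
  unfolding phiF_def[abs_def]
  using u v apply (auto intro!: derivative_eq_intros)
  apply (rule phi_alg) using u v by auto

lemma pp_alg: fixes sv cv x :: real assumes h: "sv^2 + cv^2 = 1" and x: "x \<noteq> 0" and sv: "sv \<noteq> 0"
  shows "((sv * x * cv - sv * (sv - x * cv)) * (x * sv^2) - cv * (sv - x * cv) * (sv^2 + 2 * (cv * sv) * x)) / (x * sv^2 * (x * sv^2)) = (2 * x^2 * cv - (x * sv + cv * sv^2))/(x^2 * sv^3)"
proof -
  have e: "(sv * x * cv - sv * (sv - x * cv)) * (x * sv^2) - cv * (sv - x * cv) * (sv^2 + 2 * (cv * sv) * x) = sv * (2 * x^2 * cv - (x * sv + cv * sv^2)) + (sv^2+cv^2-1) * (2 * x^2 * sv * cv - x * sv^2)"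
    by (simp add: algebra_simps power2_eq_square power3_eq_cube)
  have e2: "(sv * x * cv - sv * (sv - x * cv)) * (x * sv^2) - cv * (sv - x * cv) * (sv^2 + 2 * (cv * sv) * x) = sv * (2 * x^2 * cv - (x * sv + cv * sv^2))"
    unfolding e h by simp
  show ?thesis unfolding e2 using x sv by (simp add: field_simps power2_eq_square power3_eq_cube)
qed

lemma pp_deriv: assumes x: "x \<noteq> 0" and s: "sin x \<noteq> 0"
  shows "(ppF has_real_derivative (2*x^2*cos x - (x * sin x + cos x * (sin x)^2)) / (x^2 * (sin x)^3)) (at x)"
  unfolding ppF_def[abs_def]
  using x s apply (auto intro!: derivative_eq_intros)
  apply (rule pp_alg) using x s by auto

lemma v_pos: fixes x :: real assumes "0 < x" "x < pi/2" shows "0 < x - cos x * sin x"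
proof -
  have x85: "x < 8/5" using assms pi_half_lt by linarith
  have s2: "3628800 * sin (2*x) \<le> SI (2*x)" by (rule sin_SI) (use assms in simp)
  have "0 < 7257600*x - SI(2*x)" by (rule KI_pos[OF assms(1) x85])
  then have "sin (2*x) < 2*x" using s2 by linarith
  then show ?thesis unfolding sin_double by (simp add: mult.commute)
qed

lemma u_pos: fixes x :: real assumes "0 < x" "x < pi/2" shows "0 < sin x - x * cos x"
  using J_pos[of x] assms pi_gt_zero by linarith

lemma trig_pos: fixes x :: real assumes "0 < x" "x < pi/2" shows "0 < sin x" "0 < cos x"
  using sin_gt_zero[of x] cos_gt_zero_pi[of x] assms pi_gt_zero by linarith+

lemma phi_deriv_pos: fixes x :: real assumes "0 < x" "x < pi/2"
  shows "\<exists>y. DERIV phiF x :> y \<and> 0 < y"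
proof -
  have u: "0 < sin x - x * cos x" by (rule u_pos[OF assms])
  have v: "0 < x - cos x * sin x" by (rule v_pos[OF assms])
  have N: "0 < (x - cos x * sin x)^3 - 2*(sin x - x*cos x)^2 * (cos x * sin x - x*((cos x)^2 - (sin x)^2))"
    by (rule N_pos[OF assms])
  have "0 < ((x - cos x * sin x)^3 - 2*(sin x - x*cos x)^2 * (cos x * sin x - x*((cos x)^2 - (sin x)^2)))/((sin x - x * cos x)^2 * (x - cos x * sin x)^2)"
    using N u v by (intro divide_pos_pos mult_pos_pos) auto
  then show ?thesis using phi_deriv[of x] u v by auto
qed

lemma phi_mono: fixes a b :: real assumes "0 < a" "a < b" "b < pi/2" shows "phiF a < phiF b"
  by (rule DERIV_pos_imp_increasing[OF assms(2)]) (rule phi_deriv_pos; use assms in linarith)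

lemma phi_lim0: "((\<lambda>x. phiF x) \<longlongrightarrow> 4/5) (at_right 0)"
  unfolding phiF_def by real_asymp

lemma pp_lim0: "((\<lambda>x. ppF x) \<longlongrightarrow> 1/3) (at_right 0)"
  unfolding ppF_def by real_asymp

lemma phi_gt: fixes x :: real assumes "0 < x" "x < pi/2" shows "4/5 < phiF x"
proof -
  have "4/5 \<le> phiF (x/2)"
  proof (rule tendsto_upperbound[OF phi_lim0])
    show "\<forall>\<^sub>F i in at_right 0. phiF i \<le> phiF (x/2)"
      unfolding eventually_at_right_field
      using assms by (intro exI[of _ "x/2"]) (auto intro!: less_imp_le[OF phi_mono])
  qed simp
  moreover have "phiF (x/2) < phiF x" by (rule phi_mono) (use assms in auto)
  ultimately show ?thesis by linarith
qed

lemma phi_pi_half: "isCont phiF (pi/2)" "phiF (pi/2) = 1"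
proof -
  show "isCont phiF (pi/2)" unfolding phiF_def[abs_def]
    by (intro continuous_intros) (use pi_gt_zero in auto)
  show "phiF (pi/2) = 1" unfolding phiF_def using pi_gt_zero by simp
qed

lemma phi_lt1: fixes x :: real assumes "0 < x" "x < pi/2" shows "phiF x < 1"
proof -
  define y where "y = (x + pi/2)/2"
  have y: "x < y" "y < pi/2" using assms unfolding y_def by auto
  have lim: "(phiF \<longlongrightarrow> 1) (at_left (pi/2))"
    using phi_pi_half unfolding isCont_def by (metis filterlim_at_split)
  have "phiF y \<le> 1"
  proof (rule tendsto_lowerbound[OF lim])
    show "\<forall>\<^sub>F i in at_left (pi / 2). phiF y \<le> phiF i"
      unfolding eventually_at_left_field
      using y assms by (intro exI[of _ y]) (auto intro!: less_imp_le[OF phi_mono])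
  qed simp
  moreover have "phiF x < phiF y" by (rule phi_mono) (use assms y in auto)
  ultimately show ?thesis by linarith
qed

lemma PC_alg: fixes a b x :: real assumes U: "a - x * b \<noteq> 0" and V: "x - b * a \<noteq> 0"
  shows "(x + b * a)/(x - b * a) - b * x/(a - x * b) = (x * a + b * a^2 - 2 * x^2 * b)/((a - x * b) * (x - b * a))"
proof -
  define U where "U = a - x * b"
  define V where "V = x - b * a"
  have U0: "U \<noteq> 0" and V0: "V \<noteq> 0" using U V unfolding U_def V_def by auto
  have e: "(x + b * a)/V - b * x/U = ((x + b * a) * U - b * x * V)/(U * V)"
    using U0 V0 by (simp add: field_simps)
  have n: "(x + b * a) * U - b * x * V = x * a + b * a^2 - 2 * x^2 * b"
    unfolding U_def V_def by (simp add: algebra_simps power2_eq_square)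
  have "(x + b * a)/V - b * x/U = (x * a + b * a^2 - 2 * x^2 * b)/(U * V)" using e n by simp
  then show ?thesis unfolding U_def V_def .
qed

lemma PC_eq: fixes x :: real assumes "sin x - x * cos x \<noteq> 0" "x - cos x * sin x \<noteq> 0"
  shows "x * sin x + cos x * (sin x)^2 - 2*x^2*cos x = phiF x * ((sin x - x * cos x) * (x - cos x * sin x))"
proof -
  have "phiF x = (x * sin x + cos x * (sin x)^2 - 2*x^2*cos x)/((sin x - x * cos x) * (x - cos x * sin x))"
    unfolding phiF_def by (rule PC_alg[OF assms])
  then show ?thesis using assms by simp
qed

lemma PC_pos: fixes x :: real assumes "0 < x" "x < pi/2"
  shows "0 < x * sin x + cos x * (sin x)^2 - 2*x^2*cos x"
proof -
  have u: "0 < sin x - x * cos x" by (rule u_pos[OF assms])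
  have v: "0 < x - cos x * sin x" by (rule v_pos[OF assms])
  have "0 < phiF x" using phi_gt[OF assms] by linarith
  then have "0 < phiF x * ((sin x - x * cos x) * (x - cos x * sin x))" using u v by simp
  then show ?thesis using PC_eq[of x] u v by simp
qed

lemma pp_mono: fixes a b :: real assumes "0 < a" "a < b" "b < pi/2" shows "ppF b < ppF a"
proof (rule DERIV_neg_imp_decreasing[OF assms(2)])
  fix x assume x: "a \<le> x" "x \<le> b"
  then have x0: "0 < x" "x < pi/2" using assms by linarith+
  have s: "0 < sin x" using trig_pos[OF x0] by simp
  have "(2*x^2*cos x - (x * sin x + cos x * (sin x)^2)) / (x^2 * (sin x)^3) < 0"
    by (rule divide_neg_pos) (use PC_pos[OF x0] s x0 in auto)
  then show "\<exists>y. DERIV ppF x :> y \<and> y < 0" using pp_deriv[of x] x0 s by auto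
qed

lemma pp_lt: fixes x :: real assumes "0 < x" "x < pi/2" shows "ppF x < 1/3"
proof -
  have "ppF (x/2) \<le> 1/3"
  proof (rule tendsto_lowerbound[OF pp_lim0])
    show "\<forall>\<^sub>F i in at_right 0. ppF (x/2) \<le> ppF i"
      unfolding eventually_at_right_field
      using assms by (intro exI[of _ "x/2"]) (auto intro!: less_imp_le[OF pp_mono])
  qed simp
  moreover have "ppF x < ppF (x/2)" by (rule pp_mono) (use assms in auto)
  ultimately show ?thesis by linarith
qed

lemma pp_pos: fixes x :: real assumes "0 < x" "x < pi/2" shows "0 < ppF x"
  unfolding ppF_def using u_pos[OF assms] trig_pos[OF assms] assms by simp

lemma f_alg: fixes sv cv x k :: real
  assumes h: "sv^2 + cv^2 = 1" and pos: "0 < x" "0 < sv" "0 < cv" "0 < sv - x * cv" "0 < x - cv * sv" and k: "1 \<le> k"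
  shows "(x * sv^2 * (-2 * x^2 * cv + x * sv + cv * sv^2)) / (k * (cv * (sv - x * cv)^2 * (x - cv * sv)) + (x - cv * sv)^2 * (sv - x * cv))
       = ((x + cv * sv)/(x - cv * sv) - cv * x/(sv - x * cv)) / ((k-1) * (cv * (sv - x * cv)/(x * sv^2)) + 1)"
proof -
  define U where "U = sv - x * cv"
  define V where "V = x - cv * sv"
  have U: "0 < U" and V: "0 < V" using pos unfolding U_def V_def by auto
  have Dn: "0 < (k-1) * cv * U + x * sv^2" using k pos U by (intro add_nonneg_pos mult_nonneg_nonneg) auto
  have e0: "cv * U + V = x * sv^2"
  proof -
    have "cv * U + V = x * (1 - cv^2)" unfolding U_def V_def by (simp add: algebra_simps power2_eq_square)
    also have "1 - cv^2 = sv^2" using h by simp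
    finally show ?thesis .
  qed
  have den: "k * (cv * U^2 * V) + V^2 * U = U * V * ((k-1) * cv * U + x * sv^2)"
  proof -
    have "U * V * ((k-1) * cv * U + x * sv^2) = U * V * ((k-1) * cv * U + (cv * U + V))" unfolding e0 ..
    then show ?thesis by (simp add: algebra_simps power2_eq_square)
  qed
  have ph: "(x + cv * sv)/V - cv * x/U = (x * sv + cv * sv^2 - 2 * x^2 * cv)/(U * V)"
    using U V unfolding U_def V_def by (simp add: field_simps power2_eq_square)
  have pq: "(k-1) * (cv * U/(x * sv^2)) + 1 = ((k-1) * cv * U + x * sv^2)/(x * sv^2)"
    using pos by (simp add: field_simps)
  show ?thesis
    unfolding U_def[symmetric] V_def[symmetric] den ph pq
    using U V Dn pos by (simp add: field_simps power2_eq_square)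
qed

lemma f_eq: fixes x k :: real assumes "0 < x" "x < pi/2" "1 \<le> k"
  shows "fC x / (k * fA x + fB x) = phiF x / ((k-1) * ppF x + 1)"
  unfolding fA_def fB_def fC_def phiF_def ppF_def
  using f_alg[of "sin x" "cos x" x k] u_pos[OF assms(1,2)] v_pos[OF assms(1,2)] trig_pos[OF assms(1,2)] assms
  by (simp add: mult.commute)

theorem lemma2p1:
  fixes k :: real
  assumes "k \<ge> 1"
  shows "strict_mono_on {0<..<pi/2} (\<lambda>x. fC x / (k * fA x + fB x))
    \<and> (\<forall>x\<in>{0<..<pi/2}. 12 / (5 * (k + 2)) < fC x / (k * fA x + fB x)
                           \<and> fC x / (k * fA x + fB x) < 1)"
proof
  show "strict_mono_on {0<..<pi/2} (\<lambda>x. fC x / (k * fA x + fB x))"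
  proof (rule strict_mono_onI)
    fix a b :: real assume a: "a \<in> {0<..<pi/2}" and b: "b \<in> {0<..<pi/2}" and ab: "a < b"
    have a0: "0 < a" "a < pi/2" and b0: "0 < b" "b < pi/2" using a b by auto
    have "phiF a < phiF b" by (rule phi_mono) (use a0 b0 ab in auto)
    moreover have "ppF b < ppF a" by (rule pp_mono) (use a0 b0 ab in auto)
    moreover have "0 < ppF b" by (rule pp_pos[OF b0])
    moreover have "0 < phiF a" using phi_gt[OF a0] by linarith
    ultimately have Db: "1 \<le> (k-1) * ppF b + 1" and Dab: "(k-1) * ppF b + 1 \<le> (k-1) * ppF a + 1"
      and pa: "0 < phiF a" and pab: "phiF a < phiF b"
      using assms by (auto intro!: mult_left_mono)
    have "phiF a / ((k-1) * ppF a + 1) \<le> phiF a / ((k-1) * ppF b + 1)"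
      by (rule divide_left_mono) (use Db Dab pa in auto)
    also have "\<dots> < phiF b / ((k-1) * ppF b + 1)"
      by (rule divide_strict_right_mono) (use Db pab in auto)
    finally show "fC a / (k * fA a + fB a) < fC b / (k * fA b + fB b)"
      using f_eq[OF a0 assms] f_eq[OF b0 assms] by simp
  qed
next
  show "\<forall>x\<in>{0<..<pi/2}. 12 / (5 * (k + 2)) < fC x / (k * fA x + fB x) \<and> fC x / (k * fA x + fB x) < 1"
  proof
    fix x :: real assume "x \<in> {0<..<pi/2}"
    then have x0: "0 < x" "x < pi/2" by auto
    have ph: "4/5 < phiF x" "phiF x < 1" using phi_gt[OF x0] phi_lt1[OF x0] by auto
    have pp: "0 < ppF x" "ppF x < 1/3" using pp_pos[OF x0] pp_lt[OF x0] by auto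
    define D where "D = (k-1) * ppF x + 1"
    have D1: "1 \<le> D" unfolding D_def using pp assms by simp
    have kp: "(k-1) * ppF x \<le> (k-1) * (1/3)" by (rule mult_left_mono) (use pp assms in auto)
    then have D2: "3 * D \<le> k + 2" unfolding D_def by (auto simp: algebra_simps)
    have lo: "12 / (5 * (k + 2)) < phiF x / D"
    proof -
      have "12 * D \<le> 4 * (k + 2)" using D2 by simp
      also have "\<dots> < 5 * (k + 2) * phiF x"
      proof -
        have "(k+2) * 4 < (k+2) * (5 * phiF x)" by (rule mult_strict_left_mono) (use ph assms in auto)
        then show ?thesis by (simp add: algebra_simps)
      qed
      finally have "12 * D < 5 * (k + 2) * phiF x" .
      then show ?thesis using D1 assms by (simp add: divide_less_eq less_divide_eq field_simps)
    qed
    have hi: "phiF x / D < 1" using D1 ph by (simp add: divide_less_eq)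
    show "12 / (5 * (k + 2)) < fC x / (k * fA x + fB x) \<and> fC x / (k * fA x + fB x) < 1"
      using lo hi f_eq[OF x0 assms] unfolding D_def by simp
  qed
qed

end
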